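(* Let $T$ be a finite tree with at least one edge, and let $r\ge1$, $s\ge1$ be integers. There is a bijection between partitions of the vertex set of $T$ into $r+1$ non-empty parts, each $(s+1)$-scattered, and partitions of the edge set of $T$ into $r$ non-empty parts, each $s$-scattered.
   Context: For distinct vertices $v,w$ of a tree, their distance is the number of edges on the unique path between them. For distinct edges $e,e'$, their distance is $p-1$, where $e=e_1,e_2,\dots,e_p=e'$ is the shortest sequence of edges in which consecutive edges share a vertex (so two edges sharing a vertex have distance $1$). A set of vertices (resp. edges) is $s$-scattered if any two distinct elements have distance $\ge s$. *)

theory Defs
  imports Main "HOL-Library.Disjoint_Sets"
begin

definition vwalk :: "'a set set \<Rightarrow> 'a list \<Rightarrow> bool" where
  "vwalk E xs \<longleftrightarrow> xs \<noteq> [] \<and> (\<forall>i. Suc i < length xs \<longrightarrow> {xs ! i, xs ! Suc i} \<in> E)"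

definition tree :: "'a set \<Rightarrow> 'a set set \<Rightarrow> bool" where
  "tree V E \<longleftrightarrow> finite V \<and> V \<noteq> {} \<and>
     E \<subseteq> {{u, v} | u v. u \<in> V \<and> v \<in> V \<and> u \<noteq> v} \<and>
     (\<forall>u\<in>V. \<forall>v\<in>V. \<exists>!xs. vwalk E xs \<and> distinct xs \<and> hd xs = u \<and> last xs = v)"

definition vdist :: "'a set set \<Rightarrow> 'a \<Rightarrow> 'a \<Rightarrow> nat" where
  "vdist E u v = (LEAST n. \<exists>xs. vwalk E xs \<and> hd xs = u \<and> last xs = v \<and> length xs = Suc n)"

definition ewalk :: "'a set set \<Rightarrow> 'a set list \<Rightarrow> bool" where
  "ewalk E es \<longleftrightarrow> es \<noteq> [] \<and> set es \<subseteq> E \<and>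
     (\<forall>i. Suc i < length es \<longrightarrow> es ! i \<inter> es ! Suc i \<noteq> {})"

definition edist :: "'a set set \<Rightarrow> 'a set \<Rightarrow> 'a set \<Rightarrow> nat" where
  "edist E e e' = (LEAST n. \<exists>es. ewalk E es \<and> hd es = e \<and> last es = e' \<and> length es = Suc n)"

definition vscattered :: "'a set set \<Rightarrow> nat \<Rightarrow> 'a set \<Rightarrow> bool" where
  "vscattered E s S \<longleftrightarrow> (\<forall>u\<in>S. \<forall>v\<in>S. u \<noteq> v \<longrightarrow> s \<le> vdist E u v)"

definition escattered :: "'a set set \<Rightarrow> nat \<Rightarrow> 'a set set \<Rightarrow> bool" where
  "escattered E s F \<longleftrightarrow> (\<forall>e\<in>F. \<forall>e'\<in>F. e \<noteq> e' \<longrightarrow> s \<le> edist E e e')"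

end

theory Submission
  imports Defs
begin


definition indep :: "('b \<Rightarrow> 'b \<Rightarrow> bool) \<Rightarrow> 'b set \<Rightarrow> bool" where
  "indep R X \<longleftrightarrow> (\<forall>u\<in>X. \<forall>v\<in>X. u \<noteq> v \<longrightarrow> \<not> R u v)"

definition parts :: "'b set \<Rightarrow> ('b \<Rightarrow> 'b \<Rightarrow> bool) \<Rightarrow> nat \<Rightarrow> 'b set set set" where
  "parts A R k = {P. partition_on A P \<and> card P = k \<and> (\<forall>X\<in>P. indep R X)}"

lemma finite_parts: "finite A \<Longrightarrow> finite (parts A R k)"
  unfolding parts_def
  by (rule finite_subset[OF _ finitely_many_partition_on]) auto

lemma parts_cong:
  assumes "\<And>u v. u \<in> A \<Longrightarrow> v \<in> A \<Longrightarrow> R u v = R' u v"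
  shows "parts A R k = parts A R' k"
proof -
  have "partition_on A P \<Longrightarrow> X \<in> P \<Longrightarrow> indep R X = indep R' X" for P X
    using assms unfolding indep_def partition_on_def by blast
  thus ?thesis unfolding parts_def by blast
qed

lemma card_blocks_meeting:
  assumes P: "partition_on A P" and fin: "finite A" and NA: "N \<subseteq> A"
    and ind: "\<forall>X\<in>P. indep R X" and cl: "\<forall>u\<in>N. \<forall>v\<in>N. u \<noteq> v \<longrightarrow> R u v"
  shows "card {Y\<in>P. Y \<inter> N = {}} = card P - card N"
proof -
  have "\<forall>y\<in>N. \<exists>Y\<in>P. y \<in> Y" using P NA unfolding partition_on_def by blast
  then obtain f where f: "\<forall>y\<in>N. f y \<in> P \<and> y \<in> f y" by metis
  have inj: "inj_on f N"
  proof (rule inj_onI)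
    fix y z assume "y \<in> N" "z \<in> N" "f y = f z"
    thus "y = z" using f ind cl unfolding indep_def by metis
  qed
  have img: "f ` N = {Y\<in>P. Y \<inter> N \<noteq> {}}"
  proof
    show "f ` N \<subseteq> {Y\<in>P. Y \<inter> N \<noteq> {}}" using f by blast
    show "{Y\<in>P. Y \<inter> N \<noteq> {}} \<subseteq> f ` N"
    proof
      fix Y assume "Y \<in> {Y\<in>P. Y \<inter> N \<noteq> {}}"
      then obtain y where y: "Y \<in> P" "y \<in> Y" "y \<in> N" by blast
      have "f y = Y" using y f P unfolding partition_on_def disjoint_def by blast
      thus "Y \<in> f ` N" using y by blast
    qed
  qed
  have finP: "finite P" using finite_elements[OF fin P] .
  have eq: "{Y\<in>P. Y \<inter> N = {}} = P - {Y\<in>P. Y \<inter> N \<noteq> {}}" by blast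
  have "card {Y\<in>P. Y \<inter> N = {}} = card P - card {Y\<in>P. Y \<inter> N \<noteq> {}}"
    unfolding eq by (rule card_Diff_subset) (use finP in auto)
  moreover have "card {Y\<in>P. Y \<inter> N \<noteq> {}} = card N"
    using card_image[OF inj] img by simp
  ultimately show ?thesis by simp
qed

lemma disj_rest: "partition_on A P \<Longrightarrow> X \<in> P \<Longrightarrow> disjnt X (\<Union>(P - {X}))"
proof -
  assume a: "partition_on A P" "X \<in> P"
  have "disjoint P" using partition_onD2[OF a(1)] .
  hence "\<forall>Y\<in>P. Y \<noteq> X \<longrightarrow> X \<inter> Y = {}" using a(2) unfolding disjoint_def by blast
  thus ?thesis unfolding disjnt_def by blast
qed

lemma P_ins1: assumes "partition_on A Q" "x \<notin> A" shows "partition_on (insert x A) (insert {x} Q)"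
proof -
  have d: "disjnt {x} (\<Union>Q)" using assms partition_onD1 by (fastforce simp: disjnt_def)
  have e: "insert x A - {x} = A" using assms by auto
  show ?thesis by (subst partition_on_insert[OF d]) (simp add: e assms)
qed

lemma P_del1: assumes "partition_on (insert x A) P" "{x} \<in> P" "x \<notin> A" shows "partition_on A (P - {{x}})"
proof -
  have P: "insert {x} (P - {{x}}) = P" using assms by auto
  have d: "disjnt {x} (\<Union>(P - {{x}}))" using disj_rest[OF assms(1,2)] .
  have "partition_on (insert x A) (insert {x} (P - {{x}}))" using P assms(1) by simp
  hence "partition_on (insert x A - {x}) (P - {{x}})" by (subst (asm) partition_on_insert[OF d]) simp
  moreover have "insert x A - {x} = A" using assms by auto
  ultimately show ?thesis by simp
qed

lemma P_ins2: assumes Q: "partition_on A Q" and Y: "Y \<in> Q" and x: "x \<notin> A"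
  shows "partition_on (insert x A) (insert (insert x Y) (Q - {Y}))"
proof -
  have QQ: "insert Y (Q - {Y}) = Q" using Y by auto
  have d1: "disjnt Y (\<Union>(Q - {Y}))" using disj_rest[OF Q Y] .
  have "partition_on A (insert Y (Q - {Y}))" using QQ Q by simp
  hence r: "partition_on (A - Y) (Q - {Y})" "Y \<subseteq> A" "Y \<noteq> {}"
    by (subst (asm) partition_on_insert[OF d1], simp)+
  have "\<Union>(Q - {Y}) \<subseteq> A" using Q partition_onD1 by fastforce
  hence d2: "disjnt (insert x Y) (\<Union>(Q - {Y}))" using d1 x by (auto simp: disjnt_def)
  have e: "insert x A - insert x Y = A - Y" using x by auto
  show ?thesis by (subst partition_on_insert[OF d2]) (use r e in auto)
qed

lemma P_del2: assumes P: "partition_on (insert x A) P" and X: "X \<in> P" "x \<in> X" "X \<noteq> {x}" and x: "x \<notin> A"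
  shows "partition_on A (insert (X - {x}) (P - {X}))"
proof -
  have PP: "insert X (P - {X}) = P" using X by auto
  have d1: "disjnt X (\<Union>(P - {X}))" using disj_rest[OF P X(1)] .
  have "partition_on (insert x A) (insert X (P - {X}))" using PP P by simp
  hence r: "partition_on (insert x A - X) (P - {X})" "X \<subseteq> insert x A" "X \<noteq> {}"
    by (subst (asm) partition_on_insert[OF d1], simp)+
  have d2: "disjnt (X - {x}) (\<Union>(P - {X}))" using d1 by (auto simp: disjnt_def)
  have e: "A - (X - {x}) = insert x A - X" using x X by auto
  have f: "X - {x} \<subseteq> A" "X - {x} \<noteq> {}" using r X by auto
  show ?thesis by (subst partition_on_insert[OF d2]) (use r e f in auto)
qed

lemma count_insert:
  assumes fin: "finite A" and xA: "x \<notin> A"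
    and sym: "\<forall>u\<in>insert x A. \<forall>v\<in>insert x A. R u v = R v u"
    and N: "N = {y\<in>A. R x y}"
    and cl: "\<forall>u\<in>N. \<forall>v\<in>N. u \<noteq> v \<longrightarrow> R u v"
  shows "card (parts (insert x A) R (Suc k)) =
     card (parts A R k) + (Suc k - card N) * card (parts A R (Suc k))"
proof -
  define S where "S = parts (insert x A) R (Suc k)"
  define S1 where "S1 = {P\<in>S. {x} \<in> P}"
  define S2 where "S2 = {P\<in>S. {x} \<notin> P}"
  have finS: "finite S" unfolding S_def using finite_parts fin by blast
  have cS: "card S = card S1 + card S2"
  proof -
    have "S = S1 \<union> S2" "S1 \<inter> S2 = {}" unfolding S1_def S2_def by blast+
    moreover have "finite S1" "finite S2" using finS unfolding S1_def S2_def by auto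
    ultimately show ?thesis using card_Un_disjoint by metis
  qed
  have inj1: "inj_on (insert {x}) (parts A R k)"
  proof (rule inj_onI)
    fix Q Q' assume a: "Q \<in> parts A R k" "Q' \<in> parts A R k" "insert {x} Q = insert {x} Q'"
    have "{x} \<notin> Q" "{x} \<notin> Q'" using a(1,2) xA unfolding parts_def partition_on_def by auto
    thus "Q = Q'" using a(3) by (metis insert_ident)
  qed
  have img1: "insert {x} ` parts A R k = S1"
  proof
    show "insert {x} ` parts A R k \<subseteq> S1"
    proof
      fix P assume "P \<in> insert {x} ` parts A R k"
      then obtain Q where Q: "Q \<in> parts A R k" "P = insert {x} Q" by blast
      have Qp: "partition_on A Q" "card Q = k" "\<forall>X\<in>Q. indep R X" using Q unfolding parts_def by auto
      have "{x} \<notin> Q" using Qp(1) xA unfolding partition_on_def by auto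
      moreover have "finite Q" using finite_elements[OF fin Qp(1)] .
      ultimately have "card P = Suc k" using Q Qp by simp
      moreover have "partition_on (insert x A) P" using P_ins1[OF Qp(1) xA] Q by simp
      moreover have "\<forall>X\<in>P. indep R X" using Q Qp unfolding indep_def by auto
      ultimately show "P \<in> S1" unfolding S1_def S_def parts_def using Q by auto
    qed
    show "S1 \<subseteq> insert {x} ` parts A R k"
    proof
      fix P assume P: "P \<in> S1"
      have Pp: "partition_on (insert x A) P" "card P = Suc k" "\<forall>X\<in>P. indep R X" "{x} \<in> P"
        using P unfolding S1_def S_def parts_def by auto
      have "finite P" using finite_elements[OF _ Pp(1)] fin by simp
      hence "card (P - {{x}}) = k" using Pp by simp
      hence "P - {{x}} \<in> parts A R k" using P_del1[OF Pp(1) Pp(4) xA] Pp(3) unfolding parts_def by auto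
      moreover have "P = insert {x} (P - {{x}})" using Pp by auto
      ultimately show "P \<in> insert {x} ` parts A R k" by blast
    qed
  qed
  have c1: "card S1 = card (parts A R k)" using card_image[OF inj1] img1 by simp
  define T where "T = Sigma (parts A R (Suc k)) (\<lambda>Q. {Y\<in>Q. Y \<inter> N = {}})"
  define g where "g = (\<lambda>(Q, Y). insert (insert x Y) (Q - {Y}))"
  have inj2: "inj_on g T"
  proof (rule inj_onI)
    fix a b assume a: "a \<in> T" "b \<in> T" "g a = g b"
    obtain Q Y where ab1: "a = (Q, Y)" by (cases a)
    obtain Q' Y' where ab2: "b = (Q', Y')" by (cases b)
    have Q: "partition_on A Q" "Y \<in> Q" "partition_on A Q'" "Y' \<in> Q'"
      using a(1,2) ab1 ab2 unfolding T_def parts_def by auto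
    have AQ: "\<forall>Z\<in>Q. x \<notin> Z" "\<forall>Z\<in>Q'. x \<notin> Z" using Q xA unfolding partition_on_def by auto
    have eq: "insert (insert x Y) (Q - {Y}) = insert (insert x Y') (Q' - {Y'})"
      using a(3) ab1 ab2 unfolding g_def by simp
    have "insert x Y \<in> insert (insert x Y') (Q' - {Y'})" using eq by blast
    hence "insert x Y = insert x Y'" using AQ by blast
    moreover have "x \<notin> Y" "x \<notin> Y'" using AQ Q by auto
    ultimately have YY: "Y = Y'" by (metis insert_ident)
    have "insert x Y \<notin> Q - {Y}" "insert x Y \<notin> Q' - {Y}" using AQ by auto
    hence "Q - {Y} = Q' - {Y}" using eq YY by (metis Diff_insert_absorb)
    hence "Q = Q'" using Q YY by (metis insert_Diff)
    thus "a = b" using ab1 ab2 YY by simp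
  qed
  have img2: "g ` T = S2"
  proof
    show "g ` T \<subseteq> S2"
    proof
      fix P assume "P \<in> g ` T"
      then obtain Q Y where QY: "(Q, Y) \<in> T" "P = insert (insert x Y) (Q - {Y})" unfolding g_def by auto
      have Qp: "partition_on A Q" "card Q = Suc k" "\<forall>X\<in>Q. indep R X" "Y \<in> Q" "Y \<inter> N = {}"
        using QY(1) unfolding T_def parts_def by auto
      have AQ: "\<forall>Z\<in>Q. x \<notin> Z \<and> Z \<noteq> {} \<and> Z \<subseteq> A" using Qp xA unfolding partition_on_def by auto
      have finQ: "finite Q" using finite_elements[OF fin Qp(1)] .
      have "insert x Y \<notin> Q - {Y}" using AQ by auto
      hence "card P = Suc k" using QY(2) Qp finQ by (simp add: card_Suc_Diff1)
      moreover have "partition_on (insert x A) P" using P_ins2[OF Qp(1) Qp(4) xA] QY by simp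
      moreover have "indep R (insert x Y)"
      proof -
        have "\<forall>y\<in>Y. \<not> R x y" using Qp(5) AQ Qp(4) N by auto
        moreover have "\<forall>y\<in>Y. \<not> R y x" using calculation sym AQ Qp(4) by auto
        ultimately show ?thesis using Qp(3,4) unfolding indep_def by auto
      qed
      hence "\<forall>X\<in>P. indep R X" using QY(2) Qp(3) by auto
      moreover have "{x} \<notin> P" using QY(2) AQ Qp(4) by auto
      ultimately show "P \<in> S2" unfolding S2_def S_def parts_def by auto
    qed
    show "S2 \<subseteq> g ` T"
    proof
      fix P assume P: "P \<in> S2"
      have Pp: "partition_on (insert x A) P" "card P = Suc k" "\<forall>X\<in>P. indep R X" "{x} \<notin> P"
        using P unfolding S2_def S_def parts_def by auto
      obtain X where X: "X \<in> P" "x \<in> X" using Pp(1) unfolding partition_on_def by auto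
      have Xx: "X \<noteq> {x}" using X Pp by auto
      define Y where "Y = X - {x}"
      define Q where "Q = insert Y (P - {X})"
      have Qpart: "partition_on A Q" unfolding Q_def Y_def using P_del2[OF Pp(1) X Xx xA] .
      have YnP: "Y \<notin> P - {X}"
      proof
        assume "Y \<in> P - {X}"
        moreover have "Y \<noteq> {}" "Y \<subseteq> X" using X Xx unfolding Y_def by auto
        ultimately show False using Pp(1) X unfolding partition_on_def disjoint_def by blast
      qed
      have finP: "finite P" using finite_elements[OF _ Pp(1)] fin by simp
      have cQ: "card Q = Suc k" unfolding Q_def using YnP finP Pp(2) X by (simp add: card_Suc_Diff1)
      have iQ: "\<forall>Z\<in>Q. indep R Z" unfolding Q_def Y_def using Pp(3) X unfolding indep_def by auto
      have YN: "Y \<inter> N = {}"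
      proof -
        have "\<forall>y\<in>Y. \<not> R x y" using Pp(3) X unfolding indep_def Y_def by auto
        thus ?thesis unfolding N by auto
      qed
      have "(Q, Y) \<in> T" unfolding T_def parts_def using Qpart cQ iQ YN by (auto simp: Q_def)
      moreover have "g (Q, Y) = P"
      proof -
        have "g (Q, Y) = insert (insert x Y) (Q - {Y})" unfolding g_def by simp
        also have "Q - {Y} = P - {X}" unfolding Q_def using YnP by auto
        also have "insert x Y = X" unfolding Y_def using X by auto
        finally show ?thesis using X by auto
      qed
      ultimately show "P \<in> g ` T" by force
    qed
  qed
  have c2: "card S2 = card T" using card_image[OF inj2] img2 by simp
  have cT: "card T = card (parts A R (Suc k)) * (Suc k - card N)"
  proof -
    have "card T = (\<Sum>Q\<in>parts A R (Suc k). card {Y\<in>Q. Y \<inter> N = {}})"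
      unfolding T_def
    proof (rule card_SigmaI)
      show "finite (parts A R (Suc k))" using finite_parts fin by blast
      show "\<forall>Q\<in>parts A R (Suc k). finite {Y \<in> Q. Y \<inter> N = {}}"
        using finite_elements[OF fin] unfolding parts_def by auto
    qed
    also have "\<dots> = (\<Sum>Q\<in>parts A R (Suc k). Suc k - card N)"
    proof (rule sum.cong)
      fix Q assume "Q \<in> parts A R (Suc k)"
      hence Qp: "partition_on A Q" "card Q = Suc k" "\<forall>X\<in>Q. indep R X" unfolding parts_def by auto
      have "N \<subseteq> A" unfolding N by auto
      thus "card {Y\<in>Q. Y \<inter> N = {}} = Suc k - card N"
        using card_blocks_meeting[OF Qp(1) fin _ Qp(3) cl] Qp(2) by simp
    qed simp
    finally show ?thesis by simp
  qed
  show ?thesis using cS c1 c2 cT unfolding S_def by simp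
qed


lemma vwalk_single[simp]: "vwalk E [x]"
  unfolding vwalk_def by simp

lemma vwalk_Nil[simp]: "\<not> vwalk E []"
  unfolding vwalk_def by simp

lemma vwalk_Cons2[simp]: "vwalk E (x # y # xs) \<longleftrightarrow> {x, y} \<in> E \<and> vwalk E (y # xs)"
proof
  assume a: "vwalk E (x # y # xs)"
  have "{x, y} \<in> E" using a unfolding vwalk_def by (metis Suc_less_eq length_Cons nth_Cons_0 nth_Cons_Suc zero_less_Suc)
  moreover have "vwalk E (y # xs)" unfolding vwalk_def
  proof (intro conjI allI impI)
    fix i assume "Suc i < length (y # xs)"
    hence "Suc (Suc i) < length (x # y # xs)" by simp
    hence "{(x # y # xs) ! Suc i, (x # y # xs) ! Suc (Suc i)} \<in> E" using a unfolding vwalk_def by blast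
    thus "{(y # xs) ! i, (y # xs) ! Suc i} \<in> E" by simp
  qed simp
  ultimately show "{x, y} \<in> E \<and> vwalk E (y # xs)" by simp
next
  assume a: "{x, y} \<in> E \<and> vwalk E (y # xs)"
  show "vwalk E (x # y # xs)" unfolding vwalk_def
  proof (intro conjI allI impI)
    fix i assume i: "Suc i < length (x # y # xs)"
    show "{(x # y # xs) ! i, (x # y # xs) ! Suc i} \<in> E"
    proof (cases i)
      case 0 thus ?thesis using a by simp
    next
      case (Suc j)
      hence "Suc j < length (y # xs)" using i by simp
      hence "{(y # xs) ! j, (y # xs) ! Suc j} \<in> E" using a unfolding vwalk_def by blast
      thus ?thesis using Suc by simp
    qed
  qed simp
qed

lemma vwalk_append:
  assumes "xs \<noteq> []" "ys \<noteq> []"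
  shows "vwalk E (xs @ ys) \<longleftrightarrow> vwalk E xs \<and> vwalk E ys \<and> {last xs, hd ys} \<in> E"
  using assms
proof (induction xs)
  case Nil thus ?case by simp
next
  case (Cons x xs)
  show ?case
  proof (cases xs)
    case Nil
    then show ?thesis using Cons.prems by (cases ys) auto
  next
    case (Cons z zs)
    then show ?thesis using Cons.IH Cons.prems by auto
  qed
qed

lemma vwalk_rev: "vwalk E xs \<Longrightarrow> vwalk E (rev xs)"
proof (induction xs rule: induct_list012)
  case 1 thus ?case by simp
next
  case (2 x) thus ?case by simp
next
  case (3 x y zs)
  have "vwalk E (rev (y # zs))" using 3 by simp
  moreover have "{y, x} \<in> E" using 3(3) by (simp add: insert_commute)
  ultimately show ?case using vwalk_append[of "rev (y # zs)" "[x]" E] by simp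
qed

lemma vwalk_appendD1: "vwalk E (xs @ ys) \<Longrightarrow> xs \<noteq> [] \<Longrightarrow> vwalk E xs"
  by (cases "ys = []") (auto simp: vwalk_append)

lemma vwalk_appendD2: "vwalk E (xs @ ys) \<Longrightarrow> ys \<noteq> [] \<Longrightarrow> vwalk E ys"
  by (cases "xs = []") (auto simp: vwalk_append)

lemma loop_erase:
  "vwalk E ys \<Longrightarrow> \<exists>zs. vwalk E zs \<and> distinct zs \<and> hd zs = hd ys \<and> last zs = last ys \<and> length zs \<le> length ys"
proof (induction "length ys" arbitrary: ys rule: less_induct)
  case less
  show ?case
  proof (cases "distinct ys")
    case True thus ?thesis using less.prems by blast
  next
    case False
    then obtain as w bs cs where ys: "ys = as @ [w] @ bs @ [w] @ cs"
      using not_distinct_decomp by blast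
    define ys' where "ys' = as @ [w] @ cs"
    have w1: "vwalk E (as @ [w])" using vwalk_appendD1[of E "as @ [w]" "bs @ [w] @ cs"] less.prems ys by simp
    have w2: "vwalk E ([w] @ cs)" using vwalk_appendD2[of E "as @ [w] @ bs" "[w] @ cs"] less.prems ys by simp
    have "vwalk E ys'"
    proof (cases cs)
      case Nil thus ?thesis using w1 ys'_def by simp
    next
      case (Cons c cs')
      have "{w, c} \<in> E" using w2 Cons by simp
      moreover have "vwalk E cs" using w2 Cons by simp
      ultimately show ?thesis unfolding ys'_def using w1 vwalk_append[of "as @ [w]" cs E] Cons by simp
    qed
    moreover have "length ys' < length ys" unfolding ys'_def ys by simp
    moreover have "hd ys' = hd ys" "last ys' = last ys" unfolding ys'_def ys
      by (cases as; simp) (cases cs; simp)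
    ultimately show ?thesis using less.hyps[of ys'] by fastforce
  qed
qed

lemma ewalk_single[simp]: "ewalk E [e] \<longleftrightarrow> e \<in> E"
  unfolding ewalk_def by simp

lemma ewalk_Cons2[simp]: "ewalk E (e # f # es) \<longleftrightarrow> e \<in> E \<and> e \<inter> f \<noteq> {} \<and> ewalk E (f # es)"
proof
  assume a: "ewalk E (e # f # es)"
  have "e \<inter> f \<noteq> {}" using a unfolding ewalk_def by (metis Suc_less_eq length_Cons nth_Cons_0 nth_Cons_Suc zero_less_Suc)
  moreover have "ewalk E (f # es)" unfolding ewalk_def
  proof (intro conjI allI impI)
    show "set (f # es) \<subseteq> E" using a unfolding ewalk_def by simp
    fix i assume "Suc i < length (f # es)"
    hence "Suc (Suc i) < length (e # f # es)" by simp
    hence "(e # f # es) ! Suc i \<inter> (e # f # es) ! Suc (Suc i) \<noteq> {}" using a unfolding ewalk_def by blast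
    thus "(f # es) ! i \<inter> (f # es) ! Suc i \<noteq> {}" by simp
  qed simp
  ultimately show "e \<in> E \<and> e \<inter> f \<noteq> {} \<and> ewalk E (f # es)" using a unfolding ewalk_def by simp
next
  assume a: "e \<in> E \<and> e \<inter> f \<noteq> {} \<and> ewalk E (f # es)"
  show "ewalk E (e # f # es)" unfolding ewalk_def
  proof (intro conjI allI impI)
    show "set (e # f # es) \<subseteq> E" using a unfolding ewalk_def by simp
    fix i assume i: "Suc i < length (e # f # es)"
    show "(e # f # es) ! i \<inter> (e # f # es) ! Suc i \<noteq> {}"
    proof (cases i)
      case 0 thus ?thesis using a by simp
    next
      case (Suc j)
      hence "Suc j < length (f # es)" using i by simp
      hence "(f # es) ! j \<inter> (f # es) ! Suc j \<noteq> {}" using a unfolding ewalk_def by blast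
      thus ?thesis using Suc by simp
    qed
  qed simp
qed


locale tr =
  fixes V :: "'a set" and E :: "'a set set"
  assumes tree: "tree V E"
begin

abbreviation "d \<equiv> vdist E"

lemma finV: "finite V" and Vne: "V \<noteq> {}"
  using tree unfolding tree_def by auto

lemma edgeD: "e \<in> E \<Longrightarrow> \<exists>u v. e = {u, v} \<and> u \<in> V \<and> v \<in> V \<and> u \<noteq> v"
  using tree unfolding tree_def by blast

lemma edge2: "{x, y} \<in> E \<Longrightarrow> x \<noteq> y \<and> x \<in> V \<and> y \<in> V"
  using edgeD[of "{x,y}"] by (metis doubleton_eq_iff)

lemma uniq: "u \<in> V \<Longrightarrow> v \<in> V \<Longrightarrow> \<exists>!xs. vwalk E xs \<and> distinct xs \<and> hd xs = u \<and> last xs = v"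
  using tree unfolding tree_def by blast

lemma uniq2: "vwalk E xs \<Longrightarrow> distinct xs \<Longrightarrow> vwalk E ys \<Longrightarrow> distinct ys \<Longrightarrow> hd xs = hd ys \<Longrightarrow>
   last xs = last ys \<Longrightarrow> hd xs \<in> V \<Longrightarrow> last xs \<in> V \<Longrightarrow> xs = ys"
  using uniq by metis

lemma walk_V: "vwalk E xs \<Longrightarrow> hd xs \<in> V \<Longrightarrow> set xs \<subseteq> V"
proof (induction xs rule: induct_list012)
  case (3 x y zs)
  thus ?case using edge2[of x y] by auto
qed auto

lemma path_ex: "u \<in> V \<Longrightarrow> v \<in> V \<Longrightarrow> \<exists>xs. vwalk E xs \<and> distinct xs \<and> hd xs = u \<and> last xs = v"
  using uniq by blast

lemma dist_path:
  assumes w: "vwalk E xs" and di: "distinct xs" and h: "hd xs \<in> V"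
  shows "d (hd xs) (last xs) = length xs - 1"
proof -
  define P where "P = (\<lambda>n. \<exists>ys. vwalk E ys \<and> hd ys = hd xs \<and> last ys = last xs \<and> length ys = Suc n)"
  have ne: "xs \<noteq> []" using w by auto
  have lV: "last xs \<in> V" using walk_V[OF w h] ne by auto
  have "P (length xs - 1)" unfolding P_def using w ne by (intro exI[of _ xs]) auto
  hence le1: "Least P \<le> length xs - 1" by (rule Least_le)
  have "P (Least P)" using \<open>P (length xs - 1)\<close> by (rule LeastI)
  then obtain ys where ys: "vwalk E ys" "hd ys = hd xs" "last ys = last xs" "length ys = Suc (Least P)"
    unfolding P_def by blast
  obtain zs where zs: "vwalk E zs" "distinct zs" "hd zs = hd ys" "last zs = last ys" "length zs \<le> length ys"
    using loop_erase[OF ys(1)] by blast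
  have "zs = xs" using uniq2[OF zs(1,2) w di] zs ys h lV by simp
  hence "length xs - 1 \<le> Least P" using zs ys by simp
  moreover have "d (hd xs) (last xs) = Least P" unfolding vdist_def P_def by simp
  ultimately show ?thesis using le1 by simp
qed

lemma walk_len: "u \<in> V \<Longrightarrow> vwalk E ys \<Longrightarrow> hd ys = u \<Longrightarrow> last ys = v \<Longrightarrow> d u v + 1 \<le> length ys"
proof -
  assume a: "u \<in> V" "vwalk E ys" "hd ys = u" "last ys = v"
  obtain zs where zs: "vwalk E zs" "distinct zs" "hd zs = hd ys" "last zs = last ys" "length zs \<le> length ys"
    using loop_erase[OF a(2)] by blast
  have "zs \<noteq> []" using zs by auto
  thus ?thesis using dist_path[OF zs(1,2)] zs a by simp
qed

lemma d_sym: assumes "u \<in> V" "v \<in> V" shows "d u v = d v u"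
proof -
  obtain xs where xs: "vwalk E xs" "distinct xs" "hd xs = u" "last xs = v" using path_ex assms by blast
  have ne: "xs \<noteq> []" using xs by auto
  have "d u v = length xs - 1" using dist_path[OF xs(1,2)] xs assms by simp
  moreover have "d v u = length (rev xs) - 1" using dist_path[OF vwalk_rev[OF xs(1)]] xs assms ne
    by (simp add: hd_rev last_rev)
  ultimately show ?thesis by simp
qed

lemma d_refl[simp]: "u \<in> V \<Longrightarrow> d u u = 0"
  using dist_path[of "[u]"] by simp

lemma d_0: assumes "u \<in> V" "v \<in> V" "d u v = 0" shows "u = v"
proof -
  obtain xs where xs: "vwalk E xs" "distinct xs" "hd xs = u" "last xs = v" using path_ex assms by blast
  have "length xs = 1" using dist_path[OF xs(1,2)] xs assms by (cases xs) auto
  thus ?thesis using xs by (cases xs) auto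
qed

lemma d_edge: "{u, v} \<in> E \<Longrightarrow> d u v = 1"
  using dist_path[of "[u, v]"] edge2[of u v] by simp

lemma d_tri: assumes "u \<in> V" "v \<in> V" "w \<in> V" shows "d u w \<le> d u v + d v w"
proof -
  obtain xs where xs: "vwalk E xs" "distinct xs" "hd xs = u" "last xs = v" using path_ex assms by blast
  obtain ys where ys: "vwalk E ys" "distinct ys" "hd ys = v" "last ys = w" using path_ex assms by blast
  have nx: "xs \<noteq> []" "ys \<noteq> []" using xs ys by auto
  have "vwalk E (xs @ tl ys)"
  proof (cases "tl ys")
    case Nil thus ?thesis using xs by simp
  next
    case (Cons y ys')
    hence "ys = v # y # ys'" using ys nx by (cases ys) auto
    thus ?thesis using ys xs vwalk_append[of xs "tl ys" E] nx Cons by simp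
  qed
  moreover have "hd (xs @ tl ys) = u" using xs nx by simp
  moreover have "last (xs @ tl ys) = w" using xs ys nx by (cases ys) auto
  ultimately have "d u w + 1 \<le> length (xs @ tl ys)" using walk_len assms by blast
  moreover have "d u v = length xs - 1" using dist_path[OF xs(1,2)] xs assms by simp
  moreover have "d v w = length ys - 1" using dist_path[OF ys(1,2)] ys assms by simp
  ultimately show ?thesis using nx by simp
qed

lemma path_split:
  assumes w: "vwalk E (as @ m # bs)" and di: "distinct (as @ m # bs)" and h: "hd (as @ m # bs) \<in> V"
  shows "d (hd (as @ m # bs)) m = length as" "d m (last (as @ m # bs)) = length bs" "m \<in> V"
proof -
  have sV: "set (as @ m # bs) \<subseteq> V" using walk_V[OF w h] .
  have w1: "vwalk E (as @ [m])" using vwalk_appendD1[of E "as @ [m]" bs] w by simp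
  have w2: "vwalk E (m # bs)" using vwalk_appendD2[of E as "m # bs"] w by simp
  have "d (hd (as @ [m])) (last (as @ [m])) = length (as @ [m]) - 1"
    using dist_path[OF w1] di h by (cases as) auto
  thus "d (hd (as @ m # bs)) m = length as" by (cases as) auto
  have "d (hd (m # bs)) (last (m # bs)) = length (m # bs) - 1"
    using dist_path[OF w2] di sV by auto
  thus "d m (last (as @ m # bs)) = length bs" by simp
  show "m \<in> V" using sV by auto
qed

end


context tr begin

lemma adj: assumes e: "{x, y} \<in> E" and z: "z \<in> V"
  shows "d z y = d z x + 1 \<or> d z x = d z y + 1"
proof -
  have xy: "x \<noteq> y" "x \<in> V" "y \<in> V" using edge2[OF e] by auto
  obtain xs where xs: "vwalk E xs" "distinct xs" "hd xs = z" "last xs = x" using path_ex z xy by blast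
  have ne: "xs \<noteq> []" using xs by auto
  have dx: "d z x = length xs - 1" using dist_path[OF xs(1,2)] xs z by simp
  show ?thesis
  proof (cases "y \<in> set xs")
    case False
    have w: "vwalk E (xs @ [y])" using vwalk_append[of xs "[y]" E] xs ne e by simp
    have "d z y = length (xs @ [y]) - 1" using dist_path[OF w] xs False ne z by simp
    thus ?thesis using dx ne by simp
  next
    case True
    then obtain as bs where xsd: "xs = as @ y # bs" by (meson split_list)
    have "bs \<noteq> []" using xsd xs xy by auto
    hence xb: "x \<in> set bs" using xsd xs by (metis last_appendR last_in_set list.distinct(1) last_ConsR)
    have w1: "vwalk E (as @ [y])" using vwalk_appendD1[of E "as @ [y]" bs] xs xsd by simp
    have "{y, x} \<in> E" using e by (simp add: insert_commute)
    hence w2: "vwalk E (as @ [y, x])" using vwalk_append[of "as @ [y]" "[x]" E] w1 by simp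
    have d2: "distinct (as @ [y, x])" using xs(2) xsd xb xy by auto
    have "as @ [y, x] = xs" using uniq2[OF w2 d2 xs(1,2)] xs xsd z xy by (cases as) auto
    hence "d z x = length as + 1" using dx by auto
    moreover have "d z y = length as" using path_split(1)[of as y bs] xs xsd z by simp
    ultimately show ?thesis by simp
  qed
qed

lemma pred_uniq: assumes "{x, u} \<in> E" "{y, u} \<in> E" "d z x + 1 = d z u" "d z y + 1 = d z u" "z \<in> V"
  shows "x = y"
proof -
  have V: "x \<in> V" "y \<in> V" "u \<in> V" using edge2 assms by auto
  have ext: "\<exists>xs. vwalk E (xs @ [u]) \<and> distinct (xs @ [u]) \<and> hd (xs @ [u]) = z \<and> last xs = x \<and> xs \<noteq> []"
    if a: "{x, u} \<in> E" "d z x + 1 = d z u" "x \<in> V" for x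
  proof -
    obtain xs where xs: "vwalk E xs" "distinct xs" "hd xs = z" "last xs = x" using path_ex assms(5) a by blast
    have ne: "xs \<noteq> []" using xs by auto
    have dx: "d z x = length xs - 1" using dist_path[OF xs(1,2)] xs assms by simp
    have "u \<notin> set xs"
    proof
      assume "u \<in> set xs"
      then obtain as bs where xsd: "xs = as @ u # bs" by (meson split_list)
      have "d z u = length as" using path_split(1)[of as u bs] xs xsd assms by simp
      thus False using dx xsd a by simp
    qed
    moreover have "vwalk E (xs @ [u])" using vwalk_append[of xs "[u]" E] xs ne a by simp
    ultimately show ?thesis using xs ne by auto
  qed
  obtain xs where xs: "vwalk E (xs @ [u])" "distinct (xs @ [u])" "hd (xs @ [u]) = z" "last xs = x" "xs \<noteq> []"
    using ext[OF assms(1,3) V(1)] by blast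
  obtain ys where ys: "vwalk E (ys @ [u])" "distinct (ys @ [u])" "hd (ys @ [u]) = z" "last ys = y" "ys \<noteq> []"
    using ext[OF assms(2,4) V(2)] by blast
  have "xs @ [u] = ys @ [u]" using uniq2[OF xs(1,2) ys(1,2)] xs ys assms V by simp
  thus ?thesis using xs ys by simp
qed

lemma pred_ex: assumes "z \<in> V" "u \<in> V" "u \<noteq> z"
  shows "\<exists>w. {w, u} \<in> E \<and> d z w + 1 = d z u"
proof -
  obtain xs where xs: "vwalk E xs" "distinct xs" "hd xs = z" "last xs = u" using path_ex assms by blast
  have ne: "xs \<noteq> []" using xs by auto
  then obtain ys where ys: "xs = ys @ [u]" using xs by (metis append_butlast_last_id)
  have "ys \<noteq> []" using ys xs assms by auto
  then obtain as w where asw: "ys = as @ [w]" by (metis append_butlast_last_id)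
  have "vwalk E (as @ [w] @ [u])" using xs ys asw by simp
  hence e: "{w, u} \<in> E" using vwalk_append[of "as @ [w]" "[u]" E] by simp
  have "d z w = length as" using path_split(1)[of as w "[u]"] xs ys asw assms by simp
  moreover have "d z u = length as + 1" using path_split(1)[of "as @ [w]" u "[]"] xs ys asw assms by simp
  ultimately show ?thesis using e by auto
qed

lemma gate_last:
  assumes w: "vwalk E xs" and di: "distinct xs" and h: "hd xs \<in> V" and z: "z \<in> V"
    and m: "m \<in> set xs" and mn: "\<forall>w\<in>set xs. d z m \<le> d z w"
  shows "d z (last xs) = d z m + d m (last xs)"
proof -
  obtain as bs where xsd: "xs = as @ m # bs" using m by (meson split_list)
  have mV: "m \<in> V" using walk_V[OF w h] m by auto
  have dml: "d m (last xs) = length bs" using path_split(2)[of as m bs] w di h xsd by simp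
  show ?thesis
  proof (cases bs)
    case Nil thus ?thesis using xsd mV by simp
  next
    case (Cons b bs')
    obtain Q where Q: "vwalk E Q" "distinct Q" "hd Q = z" "last Q = m" using path_ex z mV by blast
    have nQ: "Q \<noteq> []" using Q by auto
    have dQ: "d z m = length Q - 1" using dist_path[OF Q(1,2)] Q z by simp
    have wmb: "vwalk E (m # bs)" using vwalk_appendD2[of E as "m # bs"] w xsd by simp
    hence wb: "vwalk E bs" and eb: "{m, b} \<in> E" using Cons by auto
    have wQb: "vwalk E (Q @ bs)" using vwalk_append[of Q bs E] nQ Cons Q wb eb by simp
    have disj: "set Q \<inter> set bs = {}"
    proof (rule ccontr)
      assume "set Q \<inter> set bs \<noteq> {}"
      then obtain v where v: "v \<in> set Q" "v \<in> set bs" by blast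
      have vm: "v \<noteq> m" using di xsd v by auto
      obtain q1 q2 where Qd: "Q = q1 @ v # q2" using v by (meson split_list)
      have "q2 \<noteq> []" using Qd Q vm by auto
      hence "length q1 < d z m" using dQ Qd by simp
      moreover have "d z v = length q1" using path_split(1)[of q1 v q2] Q Qd z by simp
      moreover have "v \<in> set xs" using v xsd by simp
      ultimately show False using mn by fastforce
    qed
    have dQb: "distinct (Q @ bs)" using Q(2) disj di xsd by auto
    have "d (hd (Q @ bs)) (last (Q @ bs)) = length (Q @ bs) - 1" using dist_path[OF wQb dQb] nQ Q z by simp
    hence "d z (last xs) = length Q + length bs - 1" using nQ Q xsd Cons by simp
    thus ?thesis using dQ dml nQ by (cases Q) auto
  qed
qed

lemma gate:
  assumes w: "vwalk E xs" and di: "distinct xs" and h: "hd xs \<in> V" and z: "z \<in> V"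
    and m: "m \<in> set xs" and mn: "\<forall>w\<in>set xs. d z m \<le> d z w"
  shows "d z (last xs) = d z m + d m (last xs)" "d z (hd xs) = d z m + d m (hd xs)"
proof -
  show "d z (last xs) = d z m + d m (last xs)" using gate_last assms by blast
  have ne: "xs \<noteq> []" using w by auto
  have sV: "set xs \<subseteq> V" using walk_V[OF w h] .
  have "distinct (rev xs)" "hd (rev xs) \<in> V" "m \<in> set (rev xs)" "\<forall>w\<in>set (rev xs). d z m \<le> d z w"
    using di sV ne m mn by (auto simp: hd_rev)
  hence "d z (last (rev xs)) = d z m + d m (last (rev xs))"
    using gate_last[OF vwalk_rev[OF w]] z by blast
  thus "d z (hd xs) = d z m + d m (hd xs)" using ne by (simp add: last_rev)
qed

lemma min_on_path:
  assumes "xs \<noteq> []" shows "\<exists>m\<in>set xs. \<forall>w\<in>set xs. d z m \<le> d z w"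
proof -
  have "finite (set xs)" "set xs \<noteq> {}" using assms by auto
  thus ?thesis using ex_min_if_finite[of "d z ` set xs"] by (metis (no_types, lifting) arg_min_if_finite(1,2) not_less)
qed

end


lemma vwalk_mid: "vwalk E (as @ ys @ bs) \<Longrightarrow> ys \<noteq> [] \<Longrightarrow> vwalk E ys"
  by (metis append.assoc vwalk_appendD1 vwalk_appendD2 append_is_Nil_conv)

context tr begin

lemma seg:
  assumes w: "vwalk E xs" and di: "distinct xs" and h: "hd xs \<in> V" and ij: "i \<le> j" "j < length xs"
  shows "d (xs ! i) (xs ! j) = j - i"
proof -
  define ys where "ys = drop i (take (Suc j) xs)"
  have dec: "xs = take i xs @ ys @ drop (Suc j) xs"
    unfolding ys_def using ij by (metis append.assoc append_take_drop_id min.absorb1 take_take le_SucI)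
  have len: "length ys = Suc j - i" unfolding ys_def using ij by simp
  hence ne: "ys \<noteq> []" using ij by auto
  have wy: "vwalk E ys" using vwalk_mid[of E "take i xs" ys "drop (Suc j) xs"] dec w ne by simp
  have dy: "distinct ys" unfolding ys_def using di by simp
  have hy: "hd ys = xs ! i" unfolding ys_def using ij by (simp add: hd_drop_conv_nth)
  have ly: "last ys = xs ! j" unfolding ys_def using ij ne
    by (simp add: last_conv_nth)
  have "set xs \<subseteq> V" using walk_V[OF w h] .
  hence "hd ys \<in> V" using hy ij by auto
  thus ?thesis using dist_path[OF wy dy] hy ly len by simp
qed

lemma leaf_nb:
  assumes r: "\<rho> \<in> V" "l \<in> V" "l \<noteq> \<rho>" and mx: "\<forall>u\<in>V. d \<rho> u \<le> d \<rho> l"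
  shows "\<exists>p. {p, l} \<in> E \<and> (\<forall>w. {w, l} \<in> E \<longrightarrow> w = p)"
proof -
  obtain p where p: "{p, l} \<in> E" "d \<rho> p + 1 = d \<rho> l" using pred_ex[OF r(1,2)] r(3) by blast
  have "w = p" if w: "{w, l} \<in> E" for w
  proof -
    have "w \<in> V" using edge2[OF w] by simp
    hence "d \<rho> l = d \<rho> w + 1" using adj[OF w r(1)] mx by force
    thus ?thesis using pred_uniq[OF w p(1) _ p(2) r(1)] by simp
  qed
  thus ?thesis using p by blast
qed

lemma vclique:
  assumes r: "\<rho> \<in> V" "l \<in> V" and mx: "\<forall>u\<in>V. d \<rho> u \<le> d \<rho> l"
    and uv: "u \<in> V" "v \<in> V" "d l u \<le> s" "d l v \<le> s"
  shows "d u v \<le> s"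
proof -
  obtain xs where xs: "vwalk E xs" "distinct xs" "hd xs = l" "last xs = \<rho>" using path_ex r by blast
  have ne: "xs \<noteq> []" using xs by auto
  have sV: "set xs \<subseteq> V" using walk_V xs r by blast
  define L where "L = length xs - 1"
  have lastn: "xs ! L = \<rho>" unfolding L_def using xs ne by (simp add: last_conv_nth)
  have hdn: "xs ! 0 = l" using xs ne by (simp add: hd_conv_nth)
  have DD: "d l \<rho> = L" using seg[OF xs(1,2), of 0 L] xs r hdn lastn ne unfolding L_def by simp
  have gt: "\<exists>i. i \<le> L \<and> d x l = d x (xs ! i) + i \<and> d x (xs ! i) \<le> i" if x: "x \<in> V" for x
  proof -
    obtain m where m: "m \<in> set xs" "\<forall>w\<in>set xs. d x m \<le> d x w" using min_on_path ne by blast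
    have g: "d x \<rho> = d x m + d m \<rho>" "d x l = d x m + d m l" using gate[OF xs(1,2) _ x m(1,2)] xs r by auto
    obtain i where i: "i < length xs" "xs ! i = m" using m(1) by (meson in_set_conv_nth)
    have mV: "m \<in> V" using sV m by auto
    have "d l m = i" using seg[OF xs(1,2), of 0 i] xs r hdn i by simp
    hence dml: "d m l = i" using d_sym[OF mV r(2)] by simp
    have "d m \<rho> = L - i" using seg[OF xs(1,2), of i L] xs r lastn i unfolding L_def by simp
    moreover have "d \<rho> x \<le> d \<rho> l" using mx x by simp
    hence "d x \<rho> \<le> d l \<rho>" using d_sym x r by simp
    ultimately have "d x m \<le> i" using g DD i unfolding L_def by simp
    moreover have "i \<le> L" using i unfolding L_def by simp
    ultimately show ?thesis using g dml i by (intro exI[of _ i]) auto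
  qed
  obtain i1 where i1: "i1 \<le> L" "d u l = d u (xs ! i1) + i1" "d u (xs ! i1) \<le> i1" using gt uv by blast
  obtain i2 where i2: "i2 \<le> L" "d v l = d v (xs ! i2) + i2" "d v (xs ! i2) \<le> i2" using gt uv by blast
  have L: "L < length xs" unfolding L_def using ne by simp
  have m1V: "xs ! i1 \<in> V" "xs ! i2 \<in> V" using sV i1 i2 L by auto
  have t: "d u v \<le> d u (xs ! i1) + d (xs ! i1) (xs ! i2) + d v (xs ! i2)"
    using d_tri[OF uv(1) m1V(1) uv(2)] d_tri[OF m1V(1) m1V(2) uv(2)] d_sym[OF m1V(2) uv(2)] by simp
  have ul: "d u l \<le> s" "d v l \<le> s" using uv d_sym r by auto
  show ?thesis
  proof (cases "i1 \<le> i2")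
    case True
    hence "d (xs ! i1) (xs ! i2) = i2 - i1" using seg[OF xs(1,2) _ True] xs r i2 L by simp
    thus ?thesis using t i1 i2 ul True by simp
  next
    case False
    hence "d (xs ! i2) (xs ! i1) = i1 - i2" using seg[OF xs(1,2), of i2 i1] xs r i1 L by simp
    hence "d (xs ! i1) (xs ! i2) = i1 - i2" using d_sym m1V by simp
    thus ?thesis using t i1 i2 ul False by simp
  qed
qed

end


lemma vwalk_mono: "vwalk E' xs \<Longrightarrow> E' \<subseteq> E \<Longrightarrow> vwalk E xs"
  unfolding vwalk_def by blast

context tr begin

lemma in_edge_d: assumes "f \<in> E" "a \<in> f" "b \<in> f" shows "d a b \<le> 1" "a \<in> V"
proof -
  obtain u v where f: "f = {u, v}" "u \<in> V" "v \<in> V" "u \<noteq> v" using edgeD assms by blast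
  have "d u v = 1" "d v u = 1" using d_edge assms f by (auto simp: insert_commute)
  thus "d a b \<le> 1" using assms f by auto
  show "a \<in> V" using assms f by auto
qed

lemma ew_construct:
  "vwalk E ps \<Longrightarrow> f \<in> E \<Longrightarrow> hd ps \<in> f \<Longrightarrow> g \<in> E \<Longrightarrow> last ps \<in> g \<Longrightarrow>
    \<exists>es. ewalk E es \<and> hd es = f \<and> last es = g \<and> length es = length ps + 1"
proof (induction ps arbitrary: f)
  case Nil thus ?case by simp
next
  case (Cons x zs)
  show ?case
  proof (cases zs)
    case Nil
    have "ewalk E [f, g]" using Cons.prems Nil by auto
    thus ?thesis using Nil by (intro exI[of _ "[f, g]"]) auto
  next
    case (Cons y ys)
    have e: "{x, y} \<in> E" "vwalk E zs" using Cons.prems(1) Cons by auto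
    obtain es where es: "ewalk E es" "hd es = {x, y}" "last es = g" "length es = length zs + 1"
      using Cons.IH[OF e(2) e(1)] Cons.prems Cons by auto
    have ne: "es \<noteq> []" using es by auto
    then obtain e' es' where es': "es = e' # es'" by (cases es) auto
    have "ewalk E (f # es)" using es es' Cons.prems by auto
    thus ?thesis using es ne Cons by (intro exI[of _ "f # es"]) (auto simp: es')
  qed
qed

lemma ew_bound:
  "ewalk E es \<Longrightarrow> 2 \<le> length es \<Longrightarrow> \<exists>x\<in>hd es. \<exists>y\<in>last es. d x y + 2 \<le> length es"
proof (induction es)
  case Nil thus ?case by simp
next
  case (Cons e es)
  then obtain f es'' where es: "es = f # es''" by (cases es) auto
  have h: "e \<in> E" "e \<inter> f \<noteq> {}" "ewalk E (f # es'')" using Cons.prems es by auto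
  obtain w where w: "w \<in> e" "w \<in> f" using h by blast
  have wV: "w \<in> V" using in_edge_d h w by blast
  show ?case
  proof (cases es'')
    case Nil
    have "d w w = 0" using wV by simp
    thus ?thesis using w es Nil by force
  next
    case (Cons g gs)
    obtain x y where xy: "x \<in> f" "y \<in> last es" "d x y + 2 \<le> length es"
      using Cons.IH h es Cons by auto
    have V: "x \<in> V" "y \<in> V"
    proof -
      have fE: "f \<in> E" using h(3) by (simp add: ewalk_def)
      show "x \<in> V" using in_edge_d(2)[OF fE xy(1) xy(1)] .
      have lE: "last es \<in> E" using h(3) es unfolding ewalk_def by auto
      show "y \<in> V" using in_edge_d(2)[OF lE xy(2) xy(2)] .
    qed
    have "d w y \<le> d w x + d x y" using d_tri wV V by blast
    moreover have "d w x \<le> 1" using in_edge_d h(3) w xy by (auto simp: ewalk_def)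
    ultimately show ?thesis using xy w es Cons by (intro bexI[of _ w] bexI[of _ y]) auto
  qed
qed

lemma edist_char:
  assumes fg: "f \<in> E" "g \<in> E" "f \<noteq> g"
  shows "edist E f g < s \<longleftrightarrow> (\<exists>x\<in>f. \<exists>y\<in>g. d x y + 2 \<le> s)"
proof -
  define P where "P = (\<lambda>n. \<exists>es. ewalk E es \<and> hd es = f \<and> last es = g \<and> length es = Suc n)"
  have ed: "edist E f g = Least P" unfolding edist_def P_def by simp
  have Pxy: "P (d x y + 1)" if "x \<in> f" "y \<in> g" for x y
  proof -
    have V: "x \<in> V" "y \<in> V" using in_edge_d fg that by blast+
    obtain ps where ps: "vwalk E ps" "distinct ps" "hd ps = x" "last ps = y" using path_ex V by blast
    have "d x y = length ps - 1" using dist_path[OF ps(1,2)] ps V by simp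
    moreover have "ps \<noteq> []" using ps by auto
    ultimately show ?thesis using ew_construct[OF ps(1) fg(1) _ fg(2)] ps that unfolding P_def by auto
  qed
  show ?thesis
  proof
    assume a: "edist E f g < s"
    obtain x y where "x \<in> f" "y \<in> g" using edgeD fg by blast
    hence "P (Least P)" using Pxy by (blast intro: LeastI)
    then obtain es where es: "ewalk E es" "hd es = f" "last es = g" "length es = Suc (Least P)"
      unfolding P_def by blast
    have "length es \<noteq> 1" using es fg by (cases es) auto
    hence "2 \<le> length es" using es by simp
    then obtain x y where "x \<in> f" "y \<in> g" "d x y + 2 \<le> length es" using ew_bound es by blast
    moreover have "length es \<le> s" using a ed es by simp
    ultimately show "\<exists>x\<in>f. \<exists>y\<in>g. d x y + 2 \<le> s" by (meson le_trans)
  next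
    assume "\<exists>x\<in>f. \<exists>y\<in>g. d x y + 2 \<le> s"
    then obtain x y where xy: "x \<in> f" "y \<in> g" "d x y + 2 \<le> s" by blast
    have "Least P \<le> d x y + 1" using Pxy[OF xy(1,2)] by (rule Least_le)
    thus "edist E f g < s" using ed xy by simp
  qed
qed

lemma leaf_edge: assumes "\<forall>w. {w, l} \<in> E \<longrightarrow> w = p" "f \<in> E" "l \<in> f" shows "f = {p, l}"
proof -
  obtain u v where f: "f = {u, v}" using edgeD assms by blast
  have "u = l \<or> v = l" using assms f by blast
  thus ?thesis
  proof
    assume u: "u = l"
    have "{v, l} \<in> E" using f assms(2) u by (simp add: insert_commute)
    hence "v = p" using assms(1) by blast
    thus ?thesis using f u by (simp add: insert_commute)
  next
    assume v: "v = l"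
    have "{u, l} \<in> E" using f assms(2) v by simp
    hence "u = p" using assms(1) by blast
    thus ?thesis using f v by simp
  qed
qed

lemma leaf_dist: assumes nb: "\<forall>w. {w, l} \<in> E \<longrightarrow> w = p" "{p, l} \<in> E" and y: "y \<in> V" "y \<noteq> l"
  shows "d l y = d p y + 1"
proof -
  have V: "l \<in> V" "p \<in> V" using edge2[OF nb(2)] by auto
  have ly: "l \<noteq> y" using y by auto
  obtain w where w: "{w, l} \<in> E" "d y w + 1 = d y l" using pred_ex[OF y(1) V(1) ly] by blast
  have "w = p" using nb(1) w(1) by blast
  hence "d y p + 1 = d y l" using w(2) by simp
  moreover have "d y p = d p y" "d y l = d l y" using d_sym V y by auto
  ultimately show ?thesis by simp
qed

lemma sub_tree:
  assumes l: "l \<in> V" and nb: "\<forall>w. {w, l} \<in> E \<longrightarrow> w = p" "{p, l} \<in> E" and ne: "V - {l} \<noteq> {}"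
  shows "tree (V - {l}) (E - {{p, l}})"
    "\<And>u v. u \<in> V - {l} \<Longrightarrow> v \<in> V - {l} \<Longrightarrow> vdist (E - {{p, l}}) u v = d u v"
proof -
  have avoid: "l \<notin> set xs" if xs: "vwalk E xs" "distinct xs" "hd xs \<in> V - {l}" "last xs \<in> V - {l}" for xs
  proof
    assume "l \<in> set xs"
    then obtain as bs where d: "xs = as @ l # bs" by (meson split_list)
    have "as \<noteq> []" using d xs(3) by (cases as) auto
    then obtain as' a where ab1: "as = as' @ [a]" by (metis append_butlast_last_id)
    have "bs \<noteq> []" using d xs(4) by (cases bs) auto
    then obtain b bs' where ab2: "bs = b # bs'" by (cases bs) auto
    have w: "vwalk E (as' @ [a, l] @ b # bs')" using xs(1) d ab1 ab2 by simp
    have "vwalk E [a, l]" using vwalk_mid[OF w] by simp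
    hence e1: "{a, l} \<in> E" by simp
    have w': "vwalk E ((as' @ [a]) @ [l, b] @ bs')" using xs(1) d ab1 ab2 by simp
    have "vwalk E [l, b]" using vwalk_mid[OF w'] by simp
    hence e2: "{b, l} \<in> E" by (simp add: insert_commute)
    have ap: "a = p" "b = p" using nb(1) e1 e2 by blast+
    have ab: "as = as' @ [a]" "bs = b # bs'" using ab1 ab2 by auto
    show False using ap xs(2) d ab by simp
  qed
  have sub: "vwalk (E - {{p, l}}) xs" if w: "vwalk E xs" and nl: "l \<notin> set xs" for xs
  proof -
    have "{xs ! i, xs ! Suc i} \<noteq> {p, l}" if i: "Suc i < length xs" for i
    proof -
      have "xs ! i \<noteq> l" "xs ! Suc i \<noteq> l" using nl i nth_mem[of i xs] nth_mem[of "Suc i" xs] by auto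
      thus ?thesis by (metis insertI1 insertI2 insertE singletonD)
    qed
    thus ?thesis using w unfolding vwalk_def by blast
  qed
  have paths: "\<exists>xs. vwalk E xs \<and> vwalk (E - {{p, l}}) xs \<and> distinct xs \<and> hd xs = u \<and> last xs = v"
    if uv: "u \<in> V - {l}" "v \<in> V - {l}" for u v
  proof -
    obtain xs where xs: "vwalk E xs" "distinct xs" "hd xs = u" "last xs = v" using path_ex uv by blast
    thus ?thesis using avoid[OF xs(1,2)] sub[OF xs(1)] uv by auto
  qed
  show T: "tree (V - {l}) (E - {{p, l}})" unfolding tree_def
  proof (intro conjI ballI)
    show "finite (V - {l})" using finV by simp
    show "V - {l} \<noteq> {}" by fact
    show "E - {{p, l}} \<subseteq> {{u, v} |u v. u \<in> V - {l} \<and> v \<in> V - {l} \<and> u \<noteq> v}"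
    proof
      fix f assume f: "f \<in> E - {{p, l}}"
      obtain u v where uv: "f = {u, v}" "u \<in> V" "v \<in> V" "u \<noteq> v" using edgeD f by blast
      have "l \<notin> f" using leaf_edge[OF nb(1)] f by blast
      thus "f \<in> {{u, v} |u v. u \<in> V - {l} \<and> v \<in> V - {l} \<and> u \<noteq> v}" using uv by blast
    qed
    fix u v assume uv: "u \<in> V - {l}" "v \<in> V - {l}"
    obtain xs where xs: "vwalk E xs" "vwalk (E - {{p, l}}) xs" "distinct xs" "hd xs = u" "last xs = v"
      using paths uv by blast
    show "\<exists>!xs. vwalk (E - {{p, l}}) xs \<and> distinct xs \<and> hd xs = u \<and> last xs = v"
    proof (rule ex1I[of _ xs])
      show "vwalk (E - {{p, l}}) xs \<and> distinct xs \<and> hd xs = u \<and> last xs = v" using xs by simp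
      fix ys assume ys: "vwalk (E - {{p, l}}) ys \<and> distinct ys \<and> hd ys = u \<and> last ys = v"
      have "vwalk E ys" using ys vwalk_mono by blast
      moreover have "distinct ys" "hd ys = hd xs" "last ys = last xs" "hd ys \<in> V" "last ys \<in> V"
        using ys xs uv by auto
      ultimately show "ys = xs" using uniq2[OF _ _ xs(1,3)] by blast
    qed
  qed
  interpret T': tr "V - {l}" "E - {{p, l}}" using T by unfold_locales
  fix u v assume uv: "u \<in> V - {l}" "v \<in> V - {l}"
  obtain xs where xs: "vwalk E xs" "vwalk (E - {{p, l}}) xs" "distinct xs" "hd xs = u" "last xs = v"
    using paths uv by blast
  have "vdist (E - {{p, l}}) u v = length xs - 1" using T'.dist_path[OF xs(2,3)] xs uv by simp
  moreover have "d u v = length xs - 1" using dist_path[OF xs(1,3)] xs uv by simp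
  ultimately show "vdist (E - {{p, l}}) u v = d u v" by simp
qed

end


definition RV :: "'a set set \<Rightarrow> nat \<Rightarrow> 'a \<Rightarrow> 'a \<Rightarrow> bool" where
  "RV E s u v \<longleftrightarrow> vdist E u v \<le> s"

definition RE :: "'a set set \<Rightarrow> nat \<Rightarrow> 'a set \<Rightarrow> 'a set \<Rightarrow> bool" where
  "RE E s f g \<longleftrightarrow> (\<exists>x\<in>f. \<exists>y\<in>g. vdist E x y + 2 \<le> s)"

context tr begin

lemma edge_conf:
  assumes s: "1 \<le> s" and r: "\<rho> \<in> V" "l \<in> V" and mx: "\<forall>u\<in>V. d \<rho> u \<le> d \<rho> l"
    and nb: "\<forall>w. {w, l} \<in> E \<longrightarrow> w = p" "{p, l} \<in> E"
  shows "card {f\<in>E - {{p, l}}. RE E s {p, l} f} + 1 = card {u\<in>V - {l}. RV E s l u}"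
    "\<forall>f\<in>{f\<in>E - {{p, l}}. RE E s {p, l} f}. \<forall>g\<in>{f\<in>E - {{p, l}}. RE E s {p, l} f}. f \<noteq> g \<longrightarrow> RE E s f g"
proof -
  define NV where "NV = {u\<in>V - {l}. RV E s l u}"
  define NE where "NE = {f\<in>E - {{p, l}}. RE E s {p, l} f}"
  have pV: "p \<in> V" "p \<noteq> l" using edge2[OF nb(2)] by auto
  define pr where "pr = (\<lambda>u. SOME w. {w, u} \<in> E \<and> d l w + 1 = d l u)"
  define gm where "gm = (\<lambda>u. {pr u, u})"
  have prp: "{pr u, u} \<in> E \<and> d l (pr u) + 1 = d l u" if "u \<in> V" "u \<noteq> l" for u
    unfolding pr_def using pred_ex[OF r(2) that] by (rule someI_ex)
  have ld: "d l y = d p y + 1" if "y \<in> V" "y \<noteq> l" for y using leaf_dist[OF nb that] .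
  have char: "RE E s {p, l} f \<longleftrightarrow> (\<exists>y\<in>f. d l y + 1 \<le> s)" if f: "f \<in> E - {{p, l}}" for f
  proof -
    have yV: "y \<in> V \<and> y \<noteq> l" if "y \<in> f" for y
    proof -
      have "l \<notin> f" using leaf_edge[OF nb(1)] f by blast
      thus ?thesis using in_edge_d(2)[of f y y] f that by auto
    qed
    show ?thesis unfolding RE_def
    proof
      assume "\<exists>x\<in>{p, l}. \<exists>y\<in>f. d x y + 2 \<le> s"
      then obtain x y where xy: "x \<in> {p, l}" "y \<in> f" "d x y + 2 \<le> s" by blast
      show "\<exists>y\<in>f. d l y + 1 \<le> s"
      proof (cases "x = p")
        case True thus ?thesis using xy ld yV by fastforce
      next
        case False
        hence "d l y + 1 \<le> s" using xy by auto
        thus ?thesis using xy(2) by blast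
      qed
    next
      assume "\<exists>y\<in>f. d l y + 1 \<le> s"
      then obtain y where y: "y \<in> f" "d l y + 1 \<le> s" by blast
      thus "\<exists>x\<in>{p, l}. \<exists>y\<in>f. d x y + 2 \<le> s" using ld yV by fastforce
    qed
  qed
  have dp2: "2 \<le> d l u" if "u \<in> V" "u \<noteq> l" "u \<noteq> p" for u
  proof -
    have "d p u \<noteq> 0" using d_0[OF pV(1) that(1)] that by auto
    thus ?thesis using ld that by simp
  qed
  have sub: "gm ` (NV - {p}) \<subseteq> NE"
  proof
    fix f assume "f \<in> gm ` (NV - {p})"
    then obtain u where u: "u \<in> NV - {p}" "f = gm u" by blast
    have uu: "u \<in> V" "u \<noteq> l" "u \<noteq> p" "d l u \<le> s" using u unfolding NV_def RV_def by auto
    have pp: "{pr u, u} \<in> E" "d l (pr u) + 1 = d l u" using prp uu by auto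
    have "f \<noteq> {p, l}" using u(2) uu unfolding gm_def by (auto simp: doubleton_eq_iff)
    hence fE: "f \<in> E - {{p, l}}" using pp u unfolding gm_def by simp
    have "\<exists>y\<in>f. d l y + 1 \<le> s" using pp uu u(2) unfolding gm_def by auto
    thus "f \<in> NE" using char[OF fE] fE unfolding NE_def by simp
  qed
  have inj: "inj_on gm (NV - {p})"
  proof (rule inj_onI)
    fix u v assume uv: "u \<in> NV - {p}" "v \<in> NV - {p}" "gm u = gm v"
    have V: "u \<in> V" "u \<noteq> l" "v \<in> V" "v \<noteq> l" using uv unfolding NV_def by auto
    show "u = v"
    proof (rule ccontr)
      assume ne: "u \<noteq> v"
      hence "u = pr v" "v = pr u" using uv(3) unfolding gm_def by (auto simp: doubleton_eq_iff)
      moreover have "d l (pr u) + 1 = d l u" "d l (pr v) + 1 = d l v" using prp V by auto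
      ultimately show False by simp
    qed
  qed
  have surj: "\<exists>u\<in>NV - {p}. f = gm u" if f: "f \<in> NE" for f
  proof -
    have fE: "f \<in> E" "f \<noteq> {p, l}" using f unfolding NE_def by auto
    obtain a b where ab: "f = {a, b}" "a \<in> V" "b \<in> V" "a \<noteq> b" using edgeD fE by blast
    have nl: "a \<noteq> l" "b \<noteq> l" using leaf_edge[OF nb(1) fE(1)] fE ab by auto
    have sy: "\<exists>y\<in>f. d l y + 1 \<le> s" using char f unfolding NE_def by auto
    have key: "\<exists>u\<in>NV - {p}. f = gm u" if o: "f = {a', b'}" "a' \<noteq> l" "b' \<noteq> l" "d l b' = d l a' + 1" "a' \<in> V" "b' \<in> V" for a' b'
    proof -
      have "d l b' \<le> s" using sy o by auto
      moreover have "d l a' \<noteq> 0" using d_0[OF r(2) o(5)] o by auto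
      moreover have "d l p = 1" using ld[OF pV(1) pV(2)] d_refl[OF pV(1)] by simp
      ultimately have "b' \<noteq> p" using o(4) by auto
      moreover have "d l b' \<le> s" using sy o by auto
      ultimately have bN: "b' \<in> NV - {p}" unfolding NV_def RV_def using o by auto
      have ab': "{a', b'} \<in> E" using o fE by simp
      have pb: "{pr b', b'} \<in> E" "d l (pr b') + 1 = d l b'" using prp[OF o(6) o(3)] by auto
      have "pr b' = a'" using pred_uniq[OF pb(1) ab' pb(2) o(4)[symmetric] r(2)] .
      hence "f = gm b'" using o(1) unfolding gm_def by simp
      thus ?thesis using bN by blast
    qed
    have "{a, b} \<in> E" using ab fE by simp
    hence "d l b = d l a + 1 \<or> d l a = d l b + 1" using adj r by blast
    thus ?thesis
    proof
      assume "d l b = d l a + 1" thus ?thesis using key[of a b] ab nl by blast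
    next
      assume "d l a = d l b + 1" thus ?thesis using key[of b a] ab nl by (metis insert_commute)
    qed
  qed
  have img: "gm ` (NV - {p}) = NE" using sub surj by blast
  have finNV: "finite NV" unfolding NV_def using finV by simp
  have "d l p = 1" using ld[OF pV(1) pV(2)] d_refl[OF pV(1)] by simp
  hence pN: "p \<in> NV" unfolding NV_def RV_def using pV s by simp
  have "card NE = card (NV - {p})" using card_image[OF inj] img by simp
  also have "\<dots> = card NV - 1" using pN finNV by simp
  moreover have "0 < card NV" using pN finNV card_gt_0_iff by blast
  ultimately have "card NE + 1 = card NV" by simp
  thus "card {f\<in>E - {{p, l}}. RE E s {p, l} f} + 1 = card {u\<in>V - {l}. RV E s l u}"
    unfolding NE_def NV_def .
  show "\<forall>f\<in>{f\<in>E - {{p, l}}. RE E s {p, l} f}. \<forall>g\<in>{f\<in>E - {{p, l}}. RE E s {p, l} f}. f \<noteq> g \<longrightarrow> RE E s f g"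
  proof (intro ballI impI)
    fix f g assume fg: "f \<in> {f\<in>E - {{p, l}}. RE E s {p, l} f}" "g \<in> {f\<in>E - {{p, l}}. RE E s {p, l} f}" "f \<noteq> g"
    obtain u where u: "u \<in> NV - {p}" "f = gm u" using surj fg unfolding NE_def by blast
    obtain v where v: "v \<in> NV - {p}" "g = gm v" using surj fg unfolding NE_def by blast
    have uv: "u \<noteq> v" using u v fg by auto
    have U: "u \<in> V" "u \<noteq> l" "u \<noteq> p" "d l u \<le> s" using u unfolding NV_def RV_def by auto
    have W: "v \<in> V" "v \<noteq> l" "v \<noteq> p" "d l v \<le> s" using v unfolding NV_def RV_def by auto
    have du: "2 \<le> d l u" "2 \<le> d l v" using dp2 U W by auto
    have cl: "d u v \<le> s" using vclique[OF r mx U(1) W(1) U(4) W(4)] .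
    obtain xs where xs: "vwalk E xs" "distinct xs" "hd xs = u" "last xs = v" using path_ex U W by blast
    have ne: "xs \<noteq> []" using xs by auto
    have sV: "set xs \<subseteq> V" using walk_V xs U by blast
    obtain m where m: "m \<in> set xs" "\<forall>w\<in>set xs. d l m \<le> d l w" using min_on_path ne by blast
    have g: "d l v = d l m + d m v" "d l u = d l m + d m u" using gate[OF xs(1,2) _ r(2) m] xs U by auto
    have mV: "m \<in> V" using m sV by auto
    show "RE E s f g"
    proof (cases "m = u")
      case True
      have "d l v = d l u + d u v" using g(1) True by simp
      hence "d u v + 2 \<le> s" using du W by linarith
      thus ?thesis unfolding RE_def u(2) v(2) gm_def by blast
    next
      case mu: False
      show ?thesis
      proof (cases "m = v")
        case True
        have "d l u = d l v + d v u" using g(2) True by simp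
        hence "d v u + 2 \<le> s" using du U by linarith
        hence "d u v + 2 \<le> s" using d_sym U W by simp
        thus ?thesis unfolding RE_def u(2) v(2) gm_def by blast
      next
        case mv: False
        define L where "L = length xs - 1"
        have L: "L < length xs" unfolding L_def using ne by simp
        have x0: "xs ! 0 = u" using xs ne by (simp add: hd_conv_nth)
        have xL: "xs ! L = v" unfolding L_def using xs ne by (simp add: last_conv_nth)
        obtain i where i: "i < length xs" "xs ! i = m" using m(1) by (meson in_set_conv_nth)
        have "i \<noteq> 0"
        proof
          assume "i = 0" thus False using i(2) x0 mu by simp
        qed
        hence i0: "0 < i" by simp
        have "i \<noteq> L"
        proof
          assume "i = L" thus False using i(2) xL mv by simp
        qed
        hence iL: "i < L" using i unfolding L_def by simp
        have dum: "d u m = i" using seg[OF xs(1,2), of 0 i] xs U x0 i by simp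
        have dmv: "d m v = L - i" using seg[OF xs(1,2), of i L] xs U xL i L iL by simp
        have duv: "d u v = L" using seg[OF xs(1,2), of 0 L] xs U x0 xL L by simp
        define z1 where "z1 = xs ! 1"
        define z2 where "z2 = xs ! (L - 1)"
        have zV: "z1 \<in> V" "z2 \<in> V" using sV L iL i0 unfolding z1_def z2_def by auto
        have allw: "\<forall>j. Suc j < length xs \<longrightarrow> {xs ! j, xs ! Suc j} \<in> E" using xs(1) unfolding vwalk_def by blast
        have "Suc 0 < length xs" using iL i0 L by simp
        hence "{xs ! 0, xs ! Suc 0} \<in> E" using allw by blast
        hence e1: "{u, z1} \<in> E" using x0 unfolding z1_def by simp
        have "Suc (L - 1) < length xs" "Suc (L - 1) = L" using iL i0 L by auto
        hence "{xs ! (L - 1), xs ! Suc (L - 1)} \<in> E" using allw by blast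
        hence e2: "{z2, v} \<in> E" using xL \<open>Suc (L - 1) = L\<close> unfolding z2_def by simp
        have dz1m: "d z1 m = i - 1" using seg[OF xs(1,2), of 1 i] xs U i i0 unfolding z1_def by simp
        have dmz2: "d m z2 = L - 1 - i" using seg[OF xs(1,2), of i "L - 1"] xs U i iL L unfolding z2_def by simp
        have dz: "d z1 z2 = L - 2" using seg[OF xs(1,2), of 1 "L - 1"] xs U i0 iL L unfolding z1_def z2_def by simp
        have a1: "d l z1 + 1 = d l u"
        proof -
          have "d l z1 \<le> d l m + d m z1" using d_tri r zV mV by blast
          moreover have "d m z1 = d z1 m" using d_sym zV mV by simp
          moreover have "d m u = i" using dum d_sym U mV by simp
          moreover have "d l u \<le> d l z1 + d z1 u" using d_tri r zV U by blast
          moreover have "d z1 u = 1" using d_edge e1 by (simp add: insert_commute)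
          ultimately show ?thesis using g dz1m i0 by linarith
        qed
        have a2: "d l z2 + 1 = d l v"
        proof -
          have "d l z2 \<le> d l m + d m z2" using d_tri r zV mV by blast
          moreover have "d l v \<le> d l z2 + d z2 v" using d_tri r zV W by blast
          moreover have "d z2 v = 1" using d_edge e2 by simp
          ultimately show ?thesis using g dmz2 dmv iL by linarith
        qed
        have e1': "{z1, u} \<in> E" using e1 by (simp add: insert_commute)
        have pu: "{pr u, u} \<in> E" "d l (pr u) + 1 = d l u" using prp[OF U(1,2)] by auto
        have pv: "{pr v, v} \<in> E" "d l (pr v) + 1 = d l v" using prp[OF W(1,2)] by auto
        have "z1 = pr u" using pred_uniq[OF e1' pu(1) a1 pu(2) r(2)] .
        moreover have "z2 = pr v" using pred_uniq[OF e2 pv(1) a2 pv(2) r(2)] .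
        moreover have "d z1 z2 + 2 \<le> s" using dz duv cl iL i0 by linarith
        ultimately show ?thesis unfolding RE_def u(2) v(2) gm_def by blast
      qed
    qed
  qed
qed

end


lemma partition_single: "partition_on {v} P \<longleftrightarrow> P = {{v}}"
proof
  assume a: "partition_on {v} P"
  have "\<Union>P = {v}" "{} \<notin> P" using a unfolding partition_on_def by auto
  have "\<forall>X\<in>P. X = {v}"
  proof
    fix X assume X: "X \<in> P"
    have "X \<subseteq> {v}" using X \<open>\<Union>P = {v}\<close> by blast
    moreover have "X \<noteq> {}" using X \<open>{} \<notin> P\<close> by blast
    ultimately show "X = {v}" by (simp add: subset_singleton_iff)
  qed
  moreover have "P \<noteq> {}"
  proof
    assume "P = {}" thus False using \<open>\<Union>P = {v}\<close> by simp
  qed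
  ultimately show "P = {{v}}"
  proof -
    assume all: "\<forall>X\<in>P. X = {v}" and ne: "P \<noteq> {}"
    obtain Y where Y: "Y \<in> P" using ne by blast
    hence "{v} \<in> P" using all by simp
    moreover have "P \<subseteq> {{v}}" using all by blast
    ultimately show ?thesis by blast
  qed
next
  assume "P = {{v}}" thus "partition_on {v} P" by (simp add: partition_on_space)
qed

lemma parts_zero: "A \<noteq> {} \<Longrightarrow> finite A \<Longrightarrow> parts A R 0 = {}"
proof -
  assume a: "A \<noteq> {}" "finite A"
  have "P = {}" if "partition_on A P" "card P = 0" for P
    using that finite_elements[OF a(2) that(1)] by simp
  moreover have "\<not> partition_on A {}" using a unfolding partition_on_def by auto
  ultimately show ?thesis unfolding parts_def by blast
qed

lemma main_ind:
  assumes s: "1 \<le> s"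
  shows "tree V E \<Longrightarrow> card (parts V (RV E s) (Suc k)) = card (parts E (RE E s) k)"
proof (induction "card V" arbitrary: V E k rule: less_induct)
  case less
  interpret tr V E using less.prems by unfold_locales
  show ?case
  proof (cases "card V = 1")
    case True
    then obtain v where v: "V = {v}" using card_1_singletonE by blast
    have E: "E = {}"
    proof (rule ccontr)
      assume "E \<noteq> {}"
      then obtain e where "e \<in> E" by blast
      then obtain a b where "a \<in> V" "b \<in> V" "a \<noteq> b" using edgeD by blast
      thus False using v by auto
    qed
    have p1: "parts V (RV E s) (Suc k) = (if k = 0 then {{{v}}} else {})"
      unfolding parts_def v partition_single by (auto simp: indep_def)
    have p2: "parts E (RE E s) k = (if k = 0 then {{}} else {})"
      unfolding parts_def E partition_on_empty by (auto simp: indep_def)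
    show ?thesis using p1 p2 by simp
  next
    case False
    have "0 < card V" using finV Vne card_gt_0_iff by blast
    hence cV: "2 \<le> card V" using False by linarith
    obtain \<rho> where rho: "\<rho> \<in> V" using Vne by blast
    define M where "M = Max (d \<rho> ` V)"
    have "M \<in> d \<rho> ` V" unfolding M_def using finV Vne by simp
    then obtain l where l: "l \<in> V" "d \<rho> l = M" by blast
    have mx: "\<forall>u\<in>V. d \<rho> u \<le> d \<rho> l" using l finV unfolding M_def by simp
    obtain y where y: "y \<in> V" "y \<noteq> \<rho>"
    proof -
      have "V \<noteq> {\<rho>}" using cV by auto
      hence "V - {\<rho>} \<noteq> {}" using rho by blast
      thus ?thesis using that by blast
    qed
    have "d \<rho> y \<noteq> 0" using d_0[OF rho y(1)] y by auto
    hence "d \<rho> l \<noteq> 0" using mx y by fastforce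
    hence lr: "l \<noteq> \<rho>" using rho by auto
    obtain p where nb: "{p, l} \<in> E" "\<forall>w. {w, l} \<in> E \<longrightarrow> w = p" using leaf_nb[OF rho l(1) lr mx] by blast
    have pV: "p \<in> V" "p \<noteq> l" using edge2[OF nb(1)] by auto
    define V' where "V' = V - {l}"
    define E' where "E' = E - {{p, l}}"
    have V'ne: "V' \<noteq> {}" using pV unfolding V'_def by auto
    have T': "tree V' E'" using sub_tree(1)[OF l(1) nb(2) nb(1) V'ne[unfolded V'_def]] unfolding V'_def E'_def .
    have dpres: "vdist E' u v = d u v" if "u \<in> V'" "v \<in> V'" for u v
      using sub_tree(2)[OF l(1) nb(2) nb(1) V'ne[unfolded V'_def]] that unfolding V'_def E'_def by blast
    have cV': "card V' < card V" unfolding V'_def by (rule card_Diff1_less[OF finV l(1)])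
    have IH: "card (parts V' (RV E' s) (Suc j)) = card (parts E' (RE E' s) j)" for j
      using less.hyps[OF cV' T'] .
    interpret T': tr V' E' using T' by unfold_locales
    have pv: "parts V' (RV E s) j = parts V' (RV E' s) j" for j
      by (rule parts_cong) (simp add: RV_def dpres)
    have E'V: "f \<subseteq> V'" if fE: "f \<in> E'" for f
    proof -
      obtain a b where "f = {a, b}" "a \<in> V'" "b \<in> V'" using T'.edgeD[OF fE] by blast
      thus ?thesis by auto
    qed
    have pe: "parts E' (RE E s) j = parts E' (RE E' s) j" for j
    proof (rule parts_cong)
      fix f g assume fg: "f \<in> E'" "g \<in> E'"
      have "\<forall>x\<in>f. \<forall>y\<in>g. vdist E x y = vdist E' x y"
      proof (intro ballI)
        fix x y assume "x \<in> f" "y \<in> g"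
        hence "x \<in> V'" "y \<in> V'" using E'V[OF fg(1)] E'V[OF fg(2)] by auto
        thus "vdist E x y = vdist E' x y" using dpres by simp
      qed
      thus "RE E s f g = RE E' s f g" unfolding RE_def by auto
    qed
    define NV where "NV = {u\<in>V'. RV E s l u}"
    define NE where "NE = {f\<in>E'. RE E s {p, l} f}"
    have ec1: "card NE + 1 = card NV"
      unfolding NE_def NV_def V'_def E'_def by (rule edge_conf(1)[OF s rho l(1) mx nb(2) nb(1)])
    have ec2: "\<forall>f\<in>NE. \<forall>g\<in>NE. f \<noteq> g \<longrightarrow> RE E s f g"
      unfolding NE_def NV_def V'_def E'_def by (rule edge_conf(2)[OF s rho l(1) mx nb(2) nb(1)])
    note ec = ec1 ec2
    have vcl: "\<forall>u\<in>NV. \<forall>v\<in>NV. u \<noteq> v \<longrightarrow> RV E s u v"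
    proof (intro ballI impI)
      fix u v assume uv: "u \<in> NV" "v \<in> NV"
      hence "u \<in> V" "v \<in> V" "d l u \<le> s" "d l v \<le> s" unfolding NV_def V'_def RV_def by auto
      thus "RV E s u v" unfolding RV_def using vclique[OF rho l(1) mx] by blast
    qed
    have VV: "V = insert l V'" "l \<notin> V'" unfolding V'_def using insert_Diff[OF l(1)] by blast+
    have EE: "E = insert {p, l} E'" "{p, l} \<notin> E'" unfolding E'_def using insert_Diff[OF nb(1)] by blast+
    have symV: "\<forall>u\<in>insert l V'. \<forall>v\<in>insert l V'. RV E s u v = RV E s v u"
      using d_sym VV unfolding RV_def by auto
    have symE: "\<forall>f\<in>insert {p, l} E'. \<forall>g\<in>insert {p, l} E'. RE E s f g = RE E s g f"
    proof (intro ballI)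
      fix f g assume "f \<in> insert {p, l} E'" "g \<in> insert {p, l} E'"
      hence fg: "f \<in> E" "g \<in> E" using EE by auto
      have sy: "\<forall>x\<in>f. \<forall>y\<in>g. d x y = d y x" using in_edge_d(2)[OF fg(1)] in_edge_d(2)[OF fg(2)] d_sym by blast
      show "RE E s f g = RE E s g f" unfolding RE_def
      proof
        assume "\<exists>x\<in>f. \<exists>y\<in>g. d x y + 2 \<le> s"
        then obtain x y where xy: "x \<in> f" "y \<in> g" "d x y + 2 \<le> s" by blast
        have "d x y = d y x" using sy xy by blast
        hence "d y x + 2 \<le> s" using xy by simp
        thus "\<exists>x\<in>g. \<exists>y\<in>f. d x y + 2 \<le> s" using xy by blast
      next
        assume "\<exists>x\<in>g. \<exists>y\<in>f. d x y + 2 \<le> s"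
        then obtain x y where xy: "x \<in> g" "y \<in> f" "d x y + 2 \<le> s" by blast
        have "d y x = d x y" using sy xy by blast
        hence "d y x + 2 \<le> s" using xy by simp
        thus "\<exists>x\<in>f. \<exists>y\<in>g. d x y + 2 \<le> s" using xy by blast
      qed
    qed
    have finV': "finite V'" "finite E'"
    proof -
      show fV: "finite V'" using T'.finV .
      have "E' \<subseteq> Pow V'" using E'V by blast
      thus "finite E'" using fV finite_subset by blast
    qed
    have cvert: "card (parts V (RV E s) (Suc j)) =
        card (parts V' (RV E' s) j) + (Suc j - card NV) * card (parts V' (RV E' s) (Suc j))" for j
    proof -
      have c: "card (parts (insert l V') (RV E s) (Suc j)) =
         card (parts V' (RV E s) j) + (Suc j - card NV) * card (parts V' (RV E s) (Suc j))"
        by (rule count_insert[OF finV'(1) VV(2) symV NV_def vcl])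
      show ?thesis using c unfolding VV(1)[symmetric] pv .
    qed
    have cedge: "card (parts E (RE E s) (Suc j)) =
        card (parts E' (RE E' s) j) + (Suc j - card NE) * card (parts E' (RE E' s) (Suc j))" for j
    proof -
      have c: "card (parts (insert {p, l} E') (RE E s) (Suc j)) =
         card (parts E' (RE E s) j) + (Suc j - card NE) * card (parts E' (RE E s) (Suc j))"
        by (rule count_insert[OF finV'(2) EE(2) symE NE_def ec2])
      show ?thesis using c unfolding EE(1)[symmetric] pe .
    qed
    have cNV: "1 \<le> card NV" using ec1 by linarith
    show ?thesis
    proof (cases k)
      case 0
      have z1: "parts V' (RV E' s) 0 = {}" by (rule parts_zero[OF V'ne finV'(1)])
      have Ene: "E \<noteq> {}" using nb(1) by blast
      have finE: "finite E" using finV'(2) EE(1) by simp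
      have z2: "parts E (RE E s) 0 = {}" by (rule parts_zero[OF Ene finE])
      have "Suc 0 - card NV = 0" using cNV by simp
      hence "card (parts V (RV E s) (Suc 0)) = 0" using cvert[of 0] z1 by simp
      thus ?thesis using z2 0 by simp
    next
      case (Suc j)
      have "card (parts V (RV E s) (Suc k)) =
          card (parts V' (RV E' s) (Suc j)) + (Suc (Suc j) - card NV) * card (parts V' (RV E' s) (Suc (Suc j)))"
        using cvert[of "Suc j"] Suc by simp
      also have "\<dots> = card (parts E' (RE E' s) j) + (Suc j - card NE) * card (parts E' (RE E' s) (Suc j))"
      proof -
        have "Suc (Suc j) - card NV = Suc j - card NE" using ec1 by linarith
        thus ?thesis using IH[of j] IH[of "Suc j"] by simp
      qed
      also have "\<dots> = card (parts E (RE E s) k)" using cedge[of j] Suc by simp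
      finally show ?thesis .
    qed
  qed
qed


theorem corollary3p7:
  fixes V :: "'a set" and E :: "'a set set" and r s :: nat
  assumes "tree V E" and "E \<noteq> {}" and "r \<ge> 1" and "s \<ge> 1"
  shows "\<exists>f. bij_betw f
     {P. partition_on V P \<and> card P = r + 1 \<and> (\<forall>X\<in>P. vscattered E (s + 1) X)}
     {Q. partition_on E Q \<and> card Q = r \<and> (\<forall>Y\<in>Q. escattered E s Y)}"
proof -
  interpret tr V E using assms(1) by unfold_locales
  have vs: "vscattered E (s + 1) X = indep (RV E s) X" for X
    unfolding vscattered_def indep_def RV_def by (simp add: not_le Suc_le_eq)
  have es: "escattered E s Y = indep (RE E s) Y" if Y: "Y \<subseteq> E" for Y
  proof -
    have "(s \<le> edist E f g) = (\<not> RE E s f g)" if fg: "f \<in> Y" "g \<in> Y" "f \<noteq> g" for f g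
    proof -
      have fE: "f \<in> E" "g \<in> E" using fg Y by auto
      have "edist E f g < s \<longleftrightarrow> RE E s f g" using edist_char[OF fE fg(3)] unfolding RE_def .
      moreover have "(s \<le> edist E f g) = (\<not> edist E f g < s)" by (simp add: not_less)
      ultimately show ?thesis by simp
    qed
    thus ?thesis unfolding escattered_def indep_def by blast
  qed
  have A: "{P. partition_on V P \<and> card P = r + 1 \<and> (\<forall>X\<in>P. vscattered E (s + 1) X)} = parts V (RV E s) (Suc r)"
    unfolding parts_def vs by simp
  have B: "{Q. partition_on E Q \<and> card Q = r \<and> (\<forall>Y\<in>Q. escattered E s Y)} = parts E (RE E s) r"
  proof -
    have "(\<forall>Y\<in>Q. escattered E s Y) = (\<forall>Y\<in>Q. indep (RE E s) Y)" if "partition_on E Q" for Q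
    proof -
      have "\<forall>Y\<in>Q. Y \<subseteq> E" using that unfolding partition_on_def by blast
      thus ?thesis using es by blast
    qed
    thus ?thesis unfolding parts_def by blast
  qed
  have finE: "finite E"
  proof -
    have "E \<subseteq> Pow V"
    proof
      fix e assume "e \<in> E"
      then obtain u v where "e = {u, v}" "u \<in> V" "v \<in> V" using edgeD by blast
      thus "e \<in> Pow V" by simp
    qed
    thus ?thesis using finV finite_subset by blast
  qed
  have "card (parts V (RV E s) (Suc r)) = card (parts E (RE E s) r)"
    using main_ind[OF assms(4) assms(1)] .
  moreover have "finite (parts V (RV E s) (Suc r))" "finite (parts E (RE E s) r)"
    using finite_parts finV finE by blast+
  ultimately obtain h where "bij_betw h (parts V (RV E s) (Suc r)) (parts E (RE E s) r)"
    using finite_same_card_bij by metis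
  thus ?thesis unfolding A B by blast
qed


end
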